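(* Let $(H,+)$ be a nontrivial additive subgroup of $(\mathbb R,+)$, let $r\in\mathbb R$ with $0<r\le\frac12$ or $r\ge2$ such that $rH=H$, and let $C=\langle x\rangle$ be an infinite cyclic group. Let $G=H\rtimes C$ be the semidirect product in which $x$ acts on $H$ by multiplication by $r$, i.e. $xzx^{-1}=rz$ for all $z\in H$. Then for every $t\in H\setminus\{0\}$, the elements $tx$ and $x$ generate a free submonoid of $G$ of rank $2$ (in particular a noncommutative free monoid). *)

theory Defs
  imports Complex_Main "HOL-Algebra.Group"
begin

text \<open>Elements are pairs (h, n) standing for h x^n, h in H, n in Z.
  Multiplication: (h x^m)(k x^n) = (h + r^m k) x^(m+n).\<close>
definition sdprod :: "real set \<Rightarrow> real \<Rightarrow> (real \<times> int) monoid" where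
  "sdprod H r = \<lparr> carrier = H \<times> UNIV,
                  mult = (\<lambda>(h, m) (k, n). (h + r powi m * k, m + n)),
                  one = (0, 0) \<rparr>"

definition sd_x :: "real \<times> int" where "sd_x = (0, 1)"
definition sd_h :: "real \<Rightarrow> real \<times> int" where "sd_h t = (t, 0)"

definition word_eval :: "('a, 'b) monoid_scheme \<Rightarrow> 'a \<Rightarrow> 'a \<Rightarrow> bool list \<Rightarrow> 'a" where
  "word_eval G a b w = foldr (\<lambda>c g. (if c then a else b) \<otimes>\<^bsub>G\<^esub> g) w \<one>\<^bsub>G\<^esub>"

definition free_monoid_rank2 :: "('a, 'b) monoid_scheme \<Rightarrow> 'a \<Rightarrow> 'a \<Rightarrow> bool" where
  "free_monoid_rank2 G a b \<longleftrightarrow> inj (word_eval G a b)"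

end

theory Submission
  imports Defs
begin

definition V :: "real \<Rightarrow> bool list \<Rightarrow> real" where
  "V r w = foldr (\<lambda>c v. (if c then 1 else 0) + r * v) w 0"

lemma V_simps[simp]: "V r [] = 0" "V r (c # w) = (if c then 1 else 0) + r * V r w"
  by (simp_all add: V_def)

lemma V_nonneg: "0 \<le> r \<Longrightarrow> 0 \<le> V r w"
  by (induction w) auto

lemma V_lt2: "0 \<le> r \<Longrightarrow> r \<le> 1/2 \<Longrightarrow> V r w < 2"
proof (induction w)
  case (Cons c w)
  have "r * V r w \<le> 1/2 * V r w" using Cons V_nonneg[of r w] by (intro mult_right_mono) auto
  then show ?case using Cons by auto
qed simp

lemma V_inj_small:
  assumes "0 < r" "r \<le> 1/2"
  shows "length w = length w' \<Longrightarrow> V r w = V r w' \<Longrightarrow> w = w'"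
proof (induction w arbitrary: w')
  case Nil then show ?case by simp
next
  case (Cons c w)
  then obtain c' u where w': "w' = c' # u" by (cases w') auto
  have b1: "V r w < 2" "V r u < 2" "0 \<le> V r w" "0 \<le> V r u"
    using assms V_lt2 V_nonneg by auto
  show ?case
  proof (cases "c = c'")
    case True
    then have "V r w = V r u" using Cons.prems w' assms by auto
    then show ?thesis using Cons w' True by auto
  next
    case False
    have e: "(if c then 1 else 0) + r * V r w = (if c' then 1 else 0) + r * V r u"
      using Cons.prems w' by simp
    have "r * V r w < 1" "r * V r u < 1"
    proof -
      have "r * V r w \<le> 1/2 * V r w" using assms b1 by (intro mult_right_mono) auto
      then show "r * V r w < 1" using b1 by auto
      have "r * V r u \<le> 1/2 * V r u" using assms b1 by (intro mult_right_mono) auto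
      then show "r * V r u < 1" using b1 by auto
    qed
    moreover have "0 \<le> r * V r w" "0 \<le> r * V r u" using assms b1 by auto
    ultimately show ?thesis using e False by (cases c; cases c') auto
  qed
qed

lemma V_append: "V s (xs @ [c]) = V s xs + (if c then 1 else 0) * s ^ length xs"
  by (induction xs) (auto simp: algebra_simps)

lemma V_rev: "r \<noteq> 0 \<Longrightarrow> r ^ length w * V (1/r) (rev w) = r * V r w"
proof (induction w)
  case (Cons c w)
  have "r ^ length (c # w) * V (1/r) (rev (c # w))
     = r * (r ^ length w * V (1/r) (rev w)) + (if c then 1 else 0) * r * (r ^ length w * (1/r) ^ length w)"
    by (simp add: V_append algebra_simps)
  also have "r ^ length w * (1/r) ^ length w = 1"
    using Cons.prems by (simp add: power_one_over field_simps)
  finally show ?case using Cons by (simp add: algebra_simps)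
qed simp

lemma V_inj:
  assumes "(0 < r \<and> r \<le> 1/2) \<or> r \<ge> 2"
    and "length w = length w'" "V r w = V r w'"
  shows "w = w'"
proof (cases "0 < r \<and> r \<le> 1/2")
  case True then show ?thesis using V_inj_small assms by blast
next
  case False
  then have r: "r \<ge> 2" using assms by auto
  have "r ^ length w * V (1/r) (rev w) = r ^ length w * V (1/r) (rev w')"
    using V_rev[of r w] V_rev[of r w'] r assms by auto
  then have "V (1/r) (rev w) = V (1/r) (rev w')" using r by simp
  then have "rev w = rev w'" using V_inj_small[of "1/r" "rev w" "rev w'"] r assms by auto
  then show ?thesis by simp
qed

lemma eval_form:
  "word_eval (sdprod H r) (t, 1) (0, 1) w = (t * V r w, int (length w))"
proof (induction w)
  case Nil then show ?case by (simp add: word_eval_def sdprod_def)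
next
  case (Cons c w)
  have "word_eval (sdprod H r) (t, 1) (0, 1) (c # w)
      = (if c then (t, 1) else (0, 1)) \<otimes>\<^bsub>sdprod H r\<^esub> word_eval (sdprod H r) (t, 1) (0, 1) w"
    by (simp add: word_eval_def)
  then show ?case using Cons by (auto simp: sdprod_def algebra_simps)
qed

theorem lemma3p7:
  fixes H :: "real set" and r t :: real
  assumes "0 \<in> H"
    and "\<And>a b. a \<in> H \<Longrightarrow> b \<in> H \<Longrightarrow> a + b \<in> H"
    and "\<And>a. a \<in> H \<Longrightarrow> - a \<in> H"
    and "H \<noteq> {0}"
    and "(0 < r \<and> r \<le> 1/2) \<or> r \<ge> 2"
    and "(\<lambda>z. r * z) ` H = H"
    and "t \<in> H" and "t \<noteq> 0"
  shows "free_monoid_rank2 (sdprod H r) (sd_h t \<otimes>\<^bsub>sdprod H r\<^esub> sd_x) sd_x"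
proof -
  have a: "sd_h t \<otimes>\<^bsub>sdprod H r\<^esub> sd_x = (t, 1)"
    by (simp add: sd_h_def sd_x_def sdprod_def)
  show ?thesis
    unfolding free_monoid_rank2_def a
    unfolding sd_x_def
  proof (rule injI)
    fix w w' assume "word_eval (sdprod H r) (t, 1) (0, 1) w = word_eval (sdprod H r) (t, 1) (0, 1) w'"
    then have "t * V r w = t * V r w'" "length w = length w'" by (auto simp: eval_form)
    then show "w = w'" using V_inj assms(5,8) by auto
  qed
qed

end
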